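(* Consider CAV $i$ subject to both the rear-end constraint with respect to $i_p$ and the safe-merging constraint with respect to $i-1$, as in the context, under (A1), (SA), (A3) and (A4). Assume $v_i\ge0$ at all times and $u_{\min}\le0$. Suppose that at each sampling time $t$ the applied control on $[t,t+\Delta t)$ is a feasible point of QP$_{12}(t)$ whenever QP$_{12}(t)$ is feasible. Then QP$_{12}(t_i^0+k\Delta t)$ is feasible for every integer $k\ge0$ with $[t_i^0+k\Delta t,\,t_i^0+(k+1)\Delta t]\subset[t_i^0,t_i^m]$.
   Context: **Vehicle model and times.** The vehicle dynamics are $\dot x_i=v_i$ and $\dot v_i=u_i$, where $x_i\in[0,L]$ is the distance travelled by CAV $i$ from its road's origin, $v_i$ its speed and $u_i$ its acceleration (the control). The merging point is at position $L>0$. CAV $i$ enters at time $t_i^0$ and reaches the merging point at time $t_i^m$. **Other vehicles.** CAV $i_p$ physically precedes $i$ on the same road, with position $x_{i_p}$, speed $v_{i_p}$ and acceleration $u_{i_p}$. CAV $i-1$ immediately precedes $i$ in first-in-first-out crossing order on the other road, with $x_{i-1}$, $v_{i-1}$ and $u_{i-1}$. All of these quantities are known to CAV $i$. **Constants and control bounds.** Let $z_{i,i_p}=x_{i_p}-x_i$ and $z_{i,i-1}=x_{i-1}-x_i$. The constants are $\varphi>0$, $\delta$, $k_1>0$, $k_2>0$, and $\varphi_2=\varphi/L$. Control bounds are $u_{\min}\le u_i\le u_{i,\max}$ with $u_{\min}<0<u_{i,\max}$. **(A1) Common minimum acceleration.** All CAVs share the minimum acceleration $u_{\min}$, so $u_{i_p}\ge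 u_{\min}$ and $u_{i-1}\ge u_{\min}$ at all times. **Rear-end functions:** - $b_1=z_{i,i_p}-\varphi v_i-\delta$. - $b_{\mathrm{cbf}_1}(u_i)=v_{i_p}-v_i-\varphi u_i+k_1b_1$. - $b_{F,1}=v_{i_p}-v_i+k_1b_1-\varphi u_{\min}$. - $b_{\eta_1}=v_{i_p}-v_i-\varphi u_{\min}$. - $\eta_1(u_i)=u_{i_p}-u_i+k_1b_{\eta_1}$. **Merging functions:** - $b_2=z_{i,i-1}-\varphi_2x_iv_i-\delta$. - $b_{\mathrm{cbf}_2}(u_i)=v_{i-1}-v_i-\varphi_2v_i^2-\varphi_2x_iu_i+k_2b_2$. - $b_{F,2}=v_{i-1}-v_i-\varphi_2v_i^2+k_2b_2-\varphi_2x_iu_{\min}$. - $b_{\eta_2}=v_{i-1}-v_i-\varphi_2v_i^2-\varphi_2x_iu_{\min}$. - $\eta_2(u_i)=u_{i-1}-u_i-2\varphi_2v_iu_i-\varphi_2v_iu_{\min}+k_2b_{\eta_2}$. Note that $\eta_j=\dot b_{\eta_j}+k_jb_{\eta_j}$ and $\dot b_{F,j}+k_jb_{F,j}=\eta_j+k_jb_{\mathrm{cbf}_j}$ for $j=1,2$. **QP$_{12}(t)$.** QP$_{12}(t)$ minimizes $\beta e_i^2+\tfrac12(u_i-u_{\mathrm{ref}}(t))^2$ over $(u_i,e_i)$ subject to: - $b_{\mathrm{cbf}_1}\ge0$ and $b_{\mathrm{cbf}_2}\ge0$, - $u_{\min}\le u_i\le u_{i,\max}$, - $\eta_1\ge0$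 and $\eta_2\ge0$, - a control Lyapunov constraint $c_1(t)+c_2(t)u_i\le e_i$ with free slack variable $e_i$. All quantities are evaluated at $t$. "Feasible" means the constraint set is nonempty. **(SA) Sampling / forward invariance.** The control is held constant on each $[t,t+\Delta t)$, and $\Delta t$ is small enough that for $b\in\{b_1,b_{F,1},b_{\eta_1}\}$ with gain $k=k_1$, and for $b\in\{b_2,b_{F,2},b_{\eta_2}\}$ with gain $k=k_2$: if $b(t)\ge0$ and $\dot b(t)+kb(t)\ge0$ under the applied controls, then $b(t+\Delta t)\ge0$. **(A3) Rear-end initial conditions.** $b_1(t_i^0)\ge0$, $b_{F,1}(t_i^0)\ge0$ and $b_{\eta_1}(t_i^0)\ge0$. **(A4) Merging initial conditions.** $b_2(t_i^0)\ge0$, $b_{F,2}(t_i^0)\ge0$ and $b_{\eta_2}(t_i^0)\ge0$. *)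

theory Defs
  imports "HOL-Analysis.Analysis"
begin

text \<open>All functions below take the instantaneous values (at some time t) of the
states / accelerations.  Naming: x v u = ego CAV i; xp vp up = CAV i_p
(physical predecessor, same road); xm vm um = CAV i-1 (FIFO predecessor,
other road).  phi2 = phi / L.\<close>

definition b1 :: "real \<Rightarrow> real \<Rightarrow> real \<Rightarrow> real \<Rightarrow> real \<Rightarrow> real" where
  "b1 phi delta xp x v = (xp - x) - phi * v - delta"

definition bcbf1 :: "real \<Rightarrow> real \<Rightarrow> real \<Rightarrow> real \<Rightarrow> real \<Rightarrow> real \<Rightarrow> real \<Rightarrow> real \<Rightarrow> real" where
  "bcbf1 phi delta k1 xp vp x v u = vp - v - phi * u + k1 * b1 phi delta xp x v"

definition bF1 :: "real \<Rightarrow> real \<Rightarrow> real \<Rightarrow> real \<Rightarrow> real \<Rightarrow> real \<Rightarrow> real \<Rightarrow> real \<Rightarrow> real" where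
  "bF1 phi delta k1 umin xp vp x v = vp - v + k1 * b1 phi delta xp x v - phi * umin"

definition beta1 :: "real \<Rightarrow> real \<Rightarrow> real \<Rightarrow> real \<Rightarrow> real" where
  "beta1 phi umin vp v = vp - v - phi * umin"

definition eta1 :: "real \<Rightarrow> real \<Rightarrow> real \<Rightarrow> real \<Rightarrow> real \<Rightarrow> real \<Rightarrow> real \<Rightarrow> real" where
  "eta1 phi k1 umin up vp v u = up - u + k1 * beta1 phi umin vp v"

(* time derivatives along the dynamics x'=v, v'=u (applied controls u, up) *)
definition db1 :: "real \<Rightarrow> real \<Rightarrow> real \<Rightarrow> real \<Rightarrow> real" where
  "db1 phi vp v u = vp - v - phi * u"

definition dbF1 :: "real \<Rightarrow> real \<Rightarrow> real \<Rightarrow> real \<Rightarrow> real \<Rightarrow> real \<Rightarrow> real" where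
  "dbF1 phi k1 up vp v u = up - u + k1 * (vp - v - phi * u)"

definition dbeta1 :: "real \<Rightarrow> real \<Rightarrow> real" where
  "dbeta1 up u = up - u"

definition b2 :: "real \<Rightarrow> real \<Rightarrow> real \<Rightarrow> real \<Rightarrow> real \<Rightarrow> real \<Rightarrow> real" where
  "b2 phi L delta xm x v = (xm - x) - (phi / L) * x * v - delta"

definition bcbf2 :: "real \<Rightarrow> real \<Rightarrow> real \<Rightarrow> real \<Rightarrow> real \<Rightarrow> real \<Rightarrow> real \<Rightarrow> real \<Rightarrow> real \<Rightarrow> real" where
  "bcbf2 phi L delta k2 xm vm x v u =
     vm - v - (phi / L) * v\<^sup>2 - (phi / L) * x * u + k2 * b2 phi L delta xm x v"

definition bF2 :: "real \<Rightarrow> real \<Rightarrow> real \<Rightarrow> real \<Rightarrow> real \<Rightarrow> real \<Rightarrow> real \<Rightarrow> real \<Rightarrow> real \<Rightarrow> real" where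
  "bF2 phi L delta k2 umin xm vm x v =
     vm - v - (phi / L) * v\<^sup>2 + k2 * b2 phi L delta xm x v - (phi / L) * x * umin"

definition beta2 :: "real \<Rightarrow> real \<Rightarrow> real \<Rightarrow> real \<Rightarrow> real \<Rightarrow> real \<Rightarrow> real" where
  "beta2 phi L umin vm x v = vm - v - (phi / L) * v\<^sup>2 - (phi / L) * x * umin"

definition eta2 :: "real \<Rightarrow> real \<Rightarrow> real \<Rightarrow> real \<Rightarrow> real \<Rightarrow> real \<Rightarrow> real \<Rightarrow> real \<Rightarrow> real \<Rightarrow> real" where
  "eta2 phi L k2 umin um vm x v u =
     um - u - 2 * (phi / L) * v * u - (phi / L) * v * umin + k2 * beta2 phi L umin vm x v"

(* time derivatives along the dynamics (applied controls u, um) *)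
definition db2 :: "real \<Rightarrow> real \<Rightarrow> real \<Rightarrow> real \<Rightarrow> real \<Rightarrow> real \<Rightarrow> real" where
  "db2 phi L vm x v u = vm - v - (phi / L) * (v\<^sup>2 + x * u)"

definition dbF2 :: "real \<Rightarrow> real \<Rightarrow> real \<Rightarrow> real \<Rightarrow> real \<Rightarrow> real \<Rightarrow> real \<Rightarrow> real \<Rightarrow> real \<Rightarrow> real" where
  "dbF2 phi L k2 umin um vm x v u =
     um - u - 2 * (phi / L) * v * u + k2 * (vm - v - (phi / L) * (v\<^sup>2 + x * u))
     - (phi / L) * v * umin"

definition dbeta2 :: "real \<Rightarrow> real \<Rightarrow> real \<Rightarrow> real \<Rightarrow> real \<Rightarrow> real \<Rightarrow> real" where
  "dbeta2 phi L umin um v u = um - u - 2 * (phi / L) * v * u - (phi / L) * v * umin"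

definition QP12_con ::
  "real \<Rightarrow> real \<Rightarrow> real \<Rightarrow> real \<Rightarrow> real \<Rightarrow> real \<Rightarrow> real \<Rightarrow> real \<Rightarrow> real \<Rightarrow>
   real \<Rightarrow> real \<Rightarrow> real \<Rightarrow> real \<Rightarrow> real \<Rightarrow> real \<Rightarrow> real \<Rightarrow> real \<Rightarrow>
   real \<Rightarrow> real \<Rightarrow> bool" where
  "QP12_con phi L delta k1 k2 umin umax c1 c2 xp vp up xm vm um x v u e \<longleftrightarrow>
     bcbf1 phi delta k1 xp vp x v u \<ge> 0 \<and>
     bcbf2 phi L delta k2 xm vm x v u \<ge> 0 \<and>
     umin \<le> u \<and> u \<le> umax \<and>
     eta1 phi k1 umin up vp v u \<ge> 0 \<and>
     eta2 phi L k2 umin um vm x v u \<ge> 0 \<and>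
     c1 + c2 * u \<le> e"

definition QP12_feasible ::
  "real \<Rightarrow> real \<Rightarrow> real \<Rightarrow> real \<Rightarrow> real \<Rightarrow> real \<Rightarrow> real \<Rightarrow> real \<Rightarrow> real \<Rightarrow>
   real \<Rightarrow> real \<Rightarrow> real \<Rightarrow> real \<Rightarrow> real \<Rightarrow> real \<Rightarrow> real \<Rightarrow> real \<Rightarrow> bool" where
  "QP12_feasible phi L delta k1 k2 umin umax c1 c2 xp vp up xm vm um x v \<longleftrightarrow>
     (\<exists>u e. QP12_con phi L delta k1 k2 umin umax c1 c2 xp vp up xm vm um x v u e)"

end

theory Submission
  imports Defs
begin


lemma feas_lemma:
  assumes "phi > 0" "L > 0" "umin \<le> 0" "umin < umax" "v \<ge> 0" "up \<ge> umin" "um \<ge> umin"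
    "k1 > 0" "k2 > 0"
    "bF1 phi delta k1 umin xp vp x v \<ge> 0" "beta1 phi umin vp v \<ge> 0"
    "bF2 phi L delta k2 umin xm vm x v \<ge> 0" "beta2 phi L umin vm x v \<ge> 0"
  shows "QP12_feasible phi L delta k1 k2 umin umax c1 c2 xp vp up xm vm um x v"
proof -
  have a: "bcbf1 phi delta k1 xp vp x v umin \<ge> 0" using assms(10)
    by (simp add: bcbf1_def bF1_def)
  have b: "bcbf2 phi L delta k2 xm vm x v umin \<ge> 0" using assms(12)
    by (simp add: bcbf2_def bF2_def)
  have c: "eta1 phi k1 umin up vp v umin \<ge> 0" using assms(6,8,11)
    by (simp add: eta1_def)
  have p: "(phi / L) * v * umin \<le> 0"
  proof -
    have "phi / L * v \<ge> 0" using assms(1,2,5) by simp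
    thus ?thesis using assms(3) mult_nonneg_nonpos[of "phi / L * v" umin] by simp
  qed
  have q: "k2 * beta2 phi L umin vm x v \<ge> 0" using assms(9,13) by simp
  have d: "eta2 phi L k2 umin um vm x v umin \<ge> 0" using assms(7) p q
    unfolding eta2_def by linarith
  show ?thesis unfolding QP12_feasible_def QP12_con_def
    using a b c d assms(4) by (intro exI[of _ umin] exI[of _ "c1 + c2*umin"]) auto
qed

lemma step_lemma:
  assumes "QP12_con phi L delta k1 k2 umin umax c1 c2 xp vp up xm vm um x v u e" "k1 > 0" "k2 > 0"
  shows "db1 phi vp v u + k1 * b1 phi delta xp x v \<ge> 0"
    "dbF1 phi k1 up vp v u + k1 * bF1 phi delta k1 umin xp vp x v \<ge> 0"
    "dbeta1 up u + k1 * beta1 phi umin vp v \<ge> 0"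
    "db2 phi L vm x v u + k2 * b2 phi L delta xm x v \<ge> 0"
    "dbF2 phi L k2 umin um vm x v u + k2 * bF2 phi L delta k2 umin xm vm x v \<ge> 0"
    "dbeta2 phi L umin um v u + k2 * beta2 phi L umin vm x v \<ge> 0"
proof -
  have h: "bcbf1 phi delta k1 xp vp x v u \<ge> 0" "bcbf2 phi L delta k2 xm vm x v u \<ge> 0"
    "eta1 phi k1 umin up vp v u \<ge> 0" "eta2 phi L k2 umin um vm x v u \<ge> 0"
    using assms(1) unfolding QP12_con_def by auto
  have e1: "dbF1 phi k1 up vp v u + k1 * bF1 phi delta k1 umin xp vp x v
      = eta1 phi k1 umin up vp v u + k1 * bcbf1 phi delta k1 xp vp x v u"
    unfolding dbF1_def bF1_def eta1_def bcbf1_def beta1_def by (simp add: algebra_simps)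
  have e2: "dbF2 phi L k2 umin um vm x v u + k2 * bF2 phi L delta k2 umin xm vm x v
      = eta2 phi L k2 umin um vm x v u + k2 * bcbf2 phi L delta k2 xm vm x v u"
    unfolding dbF2_def bF2_def eta2_def bcbf2_def beta2_def by (simp add: algebra_simps)
  show "db1 phi vp v u + k1 * b1 phi delta xp x v \<ge> 0"
    using h(1) by (simp add: db1_def bcbf1_def)
  show "dbF1 phi k1 up vp v u + k1 * bF1 phi delta k1 umin xp vp x v \<ge> 0"
    unfolding e1 using h(1,3) assms(2) by simp
  show "dbeta1 up u + k1 * beta1 phi umin vp v \<ge> 0"
    using h(3) by (simp add: dbeta1_def eta1_def)
  show "db2 phi L vm x v u + k2 * b2 phi L delta xm x v \<ge> 0"
    using h(2) by (simp add: db2_def bcbf2_def algebra_simps)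
  show "dbF2 phi L k2 umin um vm x v u + k2 * bF2 phi L delta k2 umin xm vm x v \<ge> 0"
    unfolding e2 using h(2,4) assms(3) by simp
  show "dbeta2 phi L umin um v u + k2 * beta2 phi L umin vm x v \<ge> 0"
    using h(4) by (simp add: dbeta2_def eta2_def)
qed

theorem theorem6:
  fixes phi delta k1 k2 L umin umax t0 tm dt :: real
    and x v u xp vp up xm vm um c1 c2 :: "real \<Rightarrow> real"
  assumes phi_pos: "phi > 0" and k1_pos: "k1 > 0" and k2_pos: "k2 > 0" and L_pos: "L > 0"
    and bounds: "umin < 0" "0 < umax" and umin_nonpos: "umin \<le> 0"
    and dt_pos: "dt > 0" and t0_tm: "t0 \<le> tm"
    \<comment> \<open>vehicle model (right derivatives: controls are piecewise constant)\<close>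
    and dyn: "\<And>t. t \<in> {t0..tm} \<Longrightarrow>
         (x has_real_derivative v t) (at t within {t..}) \<and>
         (v has_real_derivative u t) (at t within {t..}) \<and>
         (xp has_real_derivative vp t) (at t within {t..}) \<and>
         (vp has_real_derivative up t) (at t within {t..}) \<and>
         (xm has_real_derivative vm t) (at t within {t..}) \<and>
         (vm has_real_derivative um t) (at t within {t..})"
    and x_range: "\<And>t. t \<in> {t0..tm} \<Longrightarrow> 0 \<le> x t \<and> x t \<le> L"
    and x_enter: "x t0 = 0" and x_merge: "x tm = L"
    \<comment> \<open>(A1)\<close>
    and A1: "\<And>t. up t \<ge> umin \<and> um t \<ge> umin"
    \<comment> \<open>nonnegative speed at all times\<close>
    and v_nonneg: "\<And>t. v t \<ge> 0"
    \<comment> \<open>zero-order hold of the control on each sampling interval\<close>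
    and hold: "\<And>(k::nat) s. 0 \<le> s \<Longrightarrow> s < dt \<Longrightarrow>
         u (t0 + real k * dt + s) = u (t0 + real k * dt)"
    \<comment> \<open>(SA)\<close>
    and SA: "\<And>k::nat. {t0 + real k * dt .. t0 + (real k + 1) * dt} \<subseteq> {t0..tm} \<Longrightarrow>
       (let t = t0 + real k * dt; t' = t + dt in
         (b1 phi delta (xp t) (x t) (v t) \<ge> 0 \<and>
            db1 phi (vp t) (v t) (u t) + k1 * b1 phi delta (xp t) (x t) (v t) \<ge> 0
            \<longrightarrow> b1 phi delta (xp t') (x t') (v t') \<ge> 0) \<and>
         (bF1 phi delta k1 umin (xp t) (vp t) (x t) (v t) \<ge> 0 \<and>
            dbF1 phi k1 (up t) (vp t) (v t) (u t)
              + k1 * bF1 phi delta k1 umin (xp t) (vp t) (x t) (v t) \<ge> 0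
            \<longrightarrow> bF1 phi delta k1 umin (xp t') (vp t') (x t') (v t') \<ge> 0) \<and>
         (beta1 phi umin (vp t) (v t) \<ge> 0 \<and>
            dbeta1 (up t) (u t) + k1 * beta1 phi umin (vp t) (v t) \<ge> 0
            \<longrightarrow> beta1 phi umin (vp t') (v t') \<ge> 0) \<and>
         (b2 phi L delta (xm t) (x t) (v t) \<ge> 0 \<and>
            db2 phi L (vm t) (x t) (v t) (u t) + k2 * b2 phi L delta (xm t) (x t) (v t) \<ge> 0
            \<longrightarrow> b2 phi L delta (xm t') (x t') (v t') \<ge> 0) \<and>
         (bF2 phi L delta k2 umin (xm t) (vm t) (x t) (v t) \<ge> 0 \<and>
            dbF2 phi L k2 umin (um t) (vm t) (x t) (v t) (u t)
              + k2 * bF2 phi L delta k2 umin (xm t) (vm t) (x t) (v t) \<ge> 0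
            \<longrightarrow> bF2 phi L delta k2 umin (xm t') (vm t') (x t') (v t') \<ge> 0) \<and>
         (beta2 phi L umin (vm t) (x t) (v t) \<ge> 0 \<and>
            dbeta2 phi L umin (um t) (v t) (u t) + k2 * beta2 phi L umin (vm t) (x t) (v t) \<ge> 0
            \<longrightarrow> beta2 phi L umin (vm t') (x t') (v t') \<ge> 0))"
    \<comment> \<open>(A3)\<close>
    and A3: "b1 phi delta (xp t0) (x t0) (v t0) \<ge> 0"
            "bF1 phi delta k1 umin (xp t0) (vp t0) (x t0) (v t0) \<ge> 0"
            "beta1 phi umin (vp t0) (v t0) \<ge> 0"
    \<comment> \<open>(A4)\<close>
    and A4: "b2 phi L delta (xm t0) (x t0) (v t0) \<ge> 0"
            "bF2 phi L delta k2 umin (xm t0) (vm t0) (x t0) (v t0) \<ge> 0"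
            "beta2 phi L umin (vm t0) (x t0) (v t0) \<ge> 0"
    \<comment> \<open>applied control is a feasible point of QP12 whenever QP12 is feasible\<close>
    and applied: "\<And>k::nat. let t = t0 + real k * dt in
       QP12_feasible phi L delta k1 k2 umin umax (c1 t) (c2 t) (xp t) (vp t) (up t)
                     (xm t) (vm t) (um t) (x t) (v t) \<longrightarrow>
       (\<exists>e. QP12_con phi L delta k1 k2 umin umax (c1 t) (c2 t) (xp t) (vp t) (up t)
                     (xm t) (vm t) (um t) (x t) (v t) (u t) e)"
  shows "\<forall>k::nat. {t0 + real k * dt .. t0 + (real k + 1) * dt} \<subseteq> {t0..tm} \<longrightarrow>
     (let t = t0 + real k * dt in
       QP12_feasible phi L delta k1 k2 umin umax (c1 t) (c2 t) (xp t) (vp t) (up t)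
                     (xm t) (vm t) (um t) (x t) (v t))"
proof -
  define I where "I t \<longleftrightarrow> b1 phi delta (xp t) (x t) (v t) \<ge> 0 \<and>
      bF1 phi delta k1 umin (xp t) (vp t) (x t) (v t) \<ge> 0 \<and>
      beta1 phi umin (vp t) (v t) \<ge> 0 \<and>
      b2 phi L delta (xm t) (x t) (v t) \<ge> 0 \<and>
      bF2 phi L delta k2 umin (xm t) (vm t) (x t) (v t) \<ge> 0 \<and>
      beta2 phi L umin (vm t) (x t) (v t) \<ge> 0" for t
  have F: "QP12_feasible phi L delta k1 k2 umin umax (c1 t) (c2 t) (xp t) (vp t) (up t)
                     (xm t) (vm t) (um t) (x t) (v t)" if "I t" for t
    using that A1[of t] v_nonneg[of t] bounds phi_pos L_pos k1_pos k2_pos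
    by (intro feas_lemma) (auto simp: I_def)
  have main: "{t0 + real k * dt .. t0 + (real k + 1) * dt} \<subseteq> {t0..tm} \<longrightarrow> I (t0 + real k * dt)"
    for k :: nat
  proof (induction k)
    case 0
    then show ?case using A3 A4 by (simp add: I_def)
  next
    case (Suc k)
    show ?case
    proof
      assume sub: "{t0 + real (Suc k) * dt .. t0 + (real (Suc k) + 1) * dt} \<subseteq> {t0..tm}"
      have le: "t0 + real (Suc k) * dt \<le> t0 + (real (Suc k) + 1) * dt" using dt_pos by simp
      hence "t0 + (real (Suc k) + 1) * dt \<le> tm" using sub by auto
      hence sub': "{t0 + real k * dt .. t0 + (real k + 1) * dt} \<subseteq> {t0..tm}"
        using dt_pos by (auto simp: algebra_simps)
      define t where "t = t0 + real k * dt"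
      have It: "I t" using Suc.IH sub' by (simp add: t_def)
      obtain e where con: "QP12_con phi L delta k1 k2 umin umax (c1 t) (c2 t) (xp t) (vp t) (up t)
                     (xm t) (vm t) (um t) (x t) (v t) (u t) e"
        using applied[of k] F[OF It] by (auto simp: t_def Let_def)
      note st = step_lemma[OF con k1_pos k2_pos]
      have "I (t + dt)" using SA[OF sub'] It st unfolding I_def Let_def t_def by blast
      moreover have "t + dt = t0 + real (Suc k) * dt" by (simp add: t_def algebra_simps)
      ultimately show "I (t0 + real (Suc k) * dt)" by simp
    qed
  qed
  show ?thesis using main F by (simp add: Let_def)
qed

end
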